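(* For every finite poset $P$ there is a constant $C_P$ such that for all $k\ge1$, $$La([k]^2,P)\le\Big(\frac{|P|+h(P)}{2}-1\Big)k+C_P.$$ In particular, $La([k]^2,D_2)=\frac52k+O(1)$ and $La([k]^2,D_3)=3k+O(1)$.
   Context: $[k]^2$ is ordered coordinatewise. $h(P)$ is the height of $P$, the maximum size of a chain in $P$. $D_m$ is the poset on $m+2$ elements $a,b_1,\dots,b_m,c$ with relations $a<b_i<c$ for all $i$ (and $a<c$), the $b_i$ pairwise incomparable. For posets $P,R$, $P$ is a weak subposet of $R$ if there is an injection $i:P\to R$ with $p\le_P p'\Rightarrow i(p)\le_R i(p')$; a subset $F\subseteq Q$ is weak $P$-free if $P$ is not a weak subposet of $F$, and $La(Q,P)$ is the maximum size of a weak $P$-free subset of $Q$. *)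

theory Defs
  imports Complex_Main
begin

definition poset_on :: "'a set \<Rightarrow> ('a \<Rightarrow> 'a \<Rightarrow> bool) \<Rightarrow> bool" where
  "poset_on A le \<longleftrightarrow>
     (\<forall>x\<in>A. le x x) \<and>
     (\<forall>x\<in>A. \<forall>y\<in>A. le x y \<and> le y x \<longrightarrow> x = y) \<and>
     (\<forall>x\<in>A. \<forall>y\<in>A. \<forall>z\<in>A. le x y \<and> le y z \<longrightarrow> le x z)"

definition is_chain :: "('a \<Rightarrow> 'a \<Rightarrow> bool) \<Rightarrow> 'a set \<Rightarrow> bool" where
  "is_chain le C \<longleftrightarrow> (\<forall>x\<in>C. \<forall>y\<in>C. le x y \<or> le y x)"

definition height :: "'a set \<Rightarrow> ('a \<Rightarrow> 'a \<Rightarrow> bool) \<Rightarrow> nat" where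
  "height A le = Max {card C | C. C \<subseteq> A \<and> is_chain le C}"

definition weak_subposet ::
  "'a set \<Rightarrow> ('a \<Rightarrow> 'a \<Rightarrow> bool) \<Rightarrow> 'b set \<Rightarrow> ('b \<Rightarrow> 'b \<Rightarrow> bool) \<Rightarrow> bool" where
  "weak_subposet A leA B leB \<longleftrightarrow>
     (\<exists>i. inj_on i A \<and> i ` A \<subseteq> B \<and> (\<forall>p\<in>A. \<forall>q\<in>A. leA p q \<longrightarrow> leB (i p) (i q)))"

definition La ::
  "'b set \<Rightarrow> ('b \<Rightarrow> 'b \<Rightarrow> bool) \<Rightarrow> 'a set \<Rightarrow> ('a \<Rightarrow> 'a \<Rightarrow> bool) \<Rightarrow> nat" where
  "La Q leQ P leP = Max {card F | F. F \<subseteq> Q \<and> \<not> weak_subposet P leP F leQ}"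

definition grid :: "nat \<Rightarrow> (nat \<times> nat) set" where
  "grid k = {1..k} \<times> {1..k}"

definition grid_le :: "nat \<times> nat \<Rightarrow> nat \<times> nat \<Rightarrow> bool" where
  "grid_le x y \<longleftrightarrow> fst x \<le> fst y \<and> snd x \<le> snd y"

text \<open>D_m on carrier {0..m+1}: a = 0, b_i = i (1 \<le> i \<le> m), c = m+1.\<close>
definition D_set :: "nat \<Rightarrow> nat set" where
  "D_set m = {0..m+1}"

definition D_le :: "nat \<Rightarrow> nat \<Rightarrow> nat \<Rightarrow> bool" where
  "D_le m x y \<longleftrightarrow> x = y \<or> x = 0 \<or> y = m + 1"

end

theory Submission imports Defs begin

definition bandc :: "int \<Rightarrow> (nat \<times> nat) set" where
  "bandc c = {u. c \<le> int (fst u) - int (snd u) \<and> int (fst u) - int (snd u) \<le> c + 3}"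

definition innerc :: "int \<Rightarrow> nat \<times> nat \<Rightarrow> bool" where
  "innerc c u \<longleftrightarrow> c + 1 \<le> int (fst u) - int (snd u) \<and> int (fst u) - int (snd u) \<le> c + 2"

definition keyc :: "int \<Rightarrow> nat \<times> nat \<Rightarrow> int" where
  "keyc c u = 2 * (int (fst u) + int (snd u)) + (if innerc c u then 1 else 0)"

lemma same_rank_eq:
  assumes "u \<in> bandc c" "v \<in> bandc c" "fst u + snd u = fst v + snd v" "innerc c u = innerc c v"
  shows "u = v"
proof -
  obtain a b where u: "u = (a,b)" by (cases u)
  obtain a' b' where v: "v = (a',b')" by (cases v)
  have h1: "c \<le> int a - int b" "int a - int b \<le> c + 3" "c \<le> int a' - int b'" "int a' - int b' \<le> c + 3"
    using assms(1,2) unfolding u v bandc_def by auto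
  have s: "int a + int b = int a' + int b'" using assms(3) unfolding u v by simp
  have i: "(c + 1 \<le> int a - int b \<and> int a - int b \<le> c + 2) = (c + 1 \<le> int a' - int b' \<and> int a' - int b' \<le> c + 2)"
    using assms(4) unfolding u v innerc_def by simp
  have "int a = int a' \<and> int b = int b'"
    using h1 s i by smt
  then show ?thesis unfolding u v by simp
qed

lemma keyc_inj:
  assumes "u \<in> bandc c" "v \<in> bandc c" "keyc c u = keyc c v"
  shows "u = v"
proof -
  have "fst u + snd u = fst v + snd v \<and> innerc c u = innerc c v"
    using assms(3) unfolding keyc_def
    by (cases "innerc c u"; cases "innerc c v"; simp; smt)
  then show ?thesis using same_rank_eq assms by metis
qed

lemma incomp_cases:
  assumes "u \<in> bandc c" "v \<in> bandc c" "keyc c u < keyc c v" "\<not> grid_le u v"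
  shows "(fst u + snd u = fst v + snd v \<and> \<not> innerc c u \<and> innerc c v) \<or>
         (fst v + snd v = fst u + snd u + 1 \<and> \<not> innerc c u \<and> \<not> innerc c v)"
proof -
  obtain a b where u: "u = (a,b)" by (cases u)
  obtain a' b' where v: "v = (a',b')" by (cases v)
  have h1: "c \<le> int a - int b" "int a - int b \<le> c + 3" "c \<le> int a' - int b'" "int a' - int b' \<le> c + 3"
    using assms(1,2) unfolding u v bandc_def by auto
  have h2: "int a' < int a \<or> int b' < int b" using assms(4) unfolding u v grid_le_def by auto
  have h3: "2 * (int a + int b) + (if innerc c u then 1 else 0)
     < 2 * (int a' + int b') + (if innerc c v then 1 else 0)"
    using assms(3) unfolding u v keyc_def by simp
  have iu: "innerc c u \<longleftrightarrow> c + 1 \<le> int a - int b \<and> int a - int b \<le> c + 2" unfolding u innerc_def by simp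
  have iv: "innerc c v \<longleftrightarrow> c + 1 \<le> int a' - int b' \<and> int a' - int b' \<le> c + 2" unfolding v innerc_def by simp
  show ?thesis
  proof (cases "innerc c u"; cases "innerc c v")
    assume A: "innerc c u" and B: "innerc c v"
    have k: "2 * (int a + int b) < 2 * (int a' + int b')" using h3 A B by simp
    have False using h2
    proof
      assume "int a' < int a" then show False using k h1 A B iu iv by smt
    next
      assume "int b' < int b" then show False using k h1 A B iu iv by smt
    qed
    then show ?thesis ..
  next
    assume A: "innerc c u" and B: "\<not> innerc c v"
    have k: "2 * (int a + int b) + 1 < 2 * (int a' + int b')" using h3 A B by simp
    have False using h2
    proof
      assume "int a' < int a" then show False using k h1 A B iu iv by smt
    next
      assume "int b' < int b" then show False using k h1 A B iu iv by smt
    qed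
    then show ?thesis ..
  next
    assume A: "\<not> innerc c u" and B: "innerc c v"
    have k: "2 * (int a + int b) < 2 * (int a' + int b') + 1" using h3 A B by simp
    have "int a + int b = int a' + int b'" using h2
    proof
      assume "int a' < int a" then show ?thesis using k h1 A B iu iv by smt
    next
      assume "int b' < int b" then show ?thesis using k h1 A B iu iv by smt
    qed
    then show ?thesis using A B unfolding u v by simp
  next
    assume A: "\<not> innerc c u" and B: "\<not> innerc c v"
    have k: "2 * (int a + int b) < 2 * (int a' + int b')" using h3 A B by simp
    have "int a' + int b' = int a + int b + 1" using h2
    proof
      assume "int a' < int a" then show ?thesis using k h1 A B iu iv by smt
    next
      assume "int b' < int b" then show ?thesis using k h1 A B iu iv by smt
    qed
    then show ?thesis using A B unfolding u v by simp
  qed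
qed

lemma keyc_alt: "keyc c u = 2 * int (fst u + snd u) + (if innerc c u then 1 else 0)"
  unfolding keyc_def by simp

lemma two_bad:
  assumes "a1 \<in> bandc c" "a2 \<in> bandc c" "b1 \<in> bandc c" "b2 \<in> bandc c"
    "keyc c a1 < keyc c b1" "keyc c a2 < keyc c b1" "keyc c a1 < keyc c b2" "keyc c a2 < keyc c b2"
    "\<not> grid_le a1 b1" "\<not> grid_le a2 b2"
  shows "a1 = a2"
proof -
  have c1: "(fst a1 + snd a1 = fst b1 + snd b1 \<and> \<not> innerc c a1 \<and> innerc c b1) \<or>
         (fst b1 + snd b1 = fst a1 + snd a1 + 1 \<and> \<not> innerc c a1 \<and> \<not> innerc c b1)"
    using incomp_cases assms by blast
  have c2: "(fst a2 + snd a2 = fst b2 + snd b2 \<and> \<not> innerc c a2 \<and> innerc c b2) \<or>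
         (fst b2 + snd b2 = fst a2 + snd a2 + 1 \<and> \<not> innerc c a2 \<and> \<not> innerc c b2)"
    using incomp_cases assms by blast
  have n1: "\<not> innerc c a1" and n2: "\<not> innerc c a2" using c1 c2 by auto
  have k: "keyc c a1 = 2 * int (fst a1 + snd a1)" "keyc c a2 = 2 * int (fst a2 + snd a2)"
    using n1 n2 keyc_alt by auto
  have r1: "keyc c b1 \<le> 2 * int (fst a1 + snd a1) + 2"
    using c1 keyc_alt[of c b1] by auto
  have r2: "keyc c b2 \<le> 2 * int (fst a2 + snd a2) + 2"
    using c2 keyc_alt[of c b2] by auto
  have "int (fst a1 + snd a1) = int (fst a2 + snd a2)"
    using k r1 r2 assms(5-8) by smt
  then have "fst a1 + snd a1 = fst a2 + snd a2" by simp
  moreover have "innerc c a1 = innerc c a2" using n1 n2 by blast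
  ultimately show ?thesis by (rule same_rank_eq[OF assms(1,2)])
qed

lemma top_sel:
  assumes "finite F" "F \<subseteq> bandc c"
  shows "r \<le> card F \<Longrightarrow> \<exists>B\<subseteq>F. card B = r \<and> (\<forall>a\<in>F-B. \<forall>b\<in>B. keyc c a < keyc c b)"
proof (induction r)
  case 0
  show ?case by (intro exI[of _ "{}"]) auto
next
  case (Suc r)
  then obtain B where B: "B \<subseteq> F" "card B = r" "\<forall>a\<in>F-B. \<forall>b\<in>B. keyc c a < keyc c b" by auto
  have fin: "finite (F - B)" using assms by auto
  have ne: "F - B \<noteq> {}"
  proof
    assume "F - B = {}"
    then have "F \<subseteq> B" by auto
    then have "card F \<le> card B" using card_mono[OF _ \<open>F \<subseteq> B\<close>] finite_subset[OF B(1) assms(1)] by blast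
    then show False using Suc.prems B(2) by simp
  qed
  define m where "m = Max (keyc c ` (F - B))"
  have "m \<in> keyc c ` (F - B)" using fin ne by (simp add: m_def)
  then obtain a where a: "a \<in> F - B" "keyc c a = m" by auto
  have amax: "\<forall>a'\<in>F-B. keyc c a' \<le> keyc c a" using fin a m_def by auto
  have finB: "finite B" using finite_subset[OF B(1) assms(1)] .
  show ?case
  proof (intro exI[of _ "insert a B"] conjI)
    show "insert a B \<subseteq> F" using a B by auto
    show "card (insert a B) = Suc r" using a B finB by simp
    show "\<forall>a'\<in>F - insert a B. \<forall>b\<in>insert a B. keyc c a' < keyc c b"
    proof (intro ballI)
      fix a' b assume a': "a' \<in> F - insert a B" and b: "b \<in> insert a B"
      show "keyc c a' < keyc c b"
      proof (cases "b = a")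
        case True
        have "keyc c a' \<le> keyc c a" using amax a' by auto
        moreover have "keyc c a' \<noteq> keyc c a"
        proof
          assume "keyc c a' = keyc c a"
          then have "a' = a" using keyc_inj[of a' c a] a' a assms(2) by blast
          then show False using a' by auto
        qed
        ultimately show ?thesis using True by simp
      next
        case False
        then have "b \<in> B" using b by auto
        then show ?thesis using B(3) a' by auto
      qed
    qed
  qed
qed


lemma blocks:
  assumes "F \<subseteq> bandc c" "finite F" "(\<Sum>i<h. r i) + h \<le> card F + 1"
  shows "\<exists>B. (\<forall>i<h. B i \<subseteq> F \<and> card (B i) = r i)
           \<and> (\<forall>i<h. \<forall>j<h. i < j \<longrightarrow> (\<forall>a\<in>B i. \<forall>b\<in>B j. grid_le a b))
           \<and> (\<forall>i<h. \<forall>j<h. i \<noteq> j \<longrightarrow> B i \<inter> B j = {})"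
  using assms
proof (induction h arbitrary: F)
  case 0
  show ?case by auto
next
  case (Suc h)
  have rh: "r h \<le> card F" using Suc.prems(3) by simp
  obtain T where T: "T \<subseteq> F" "card T = r h" "\<forall>a\<in>F-T. \<forall>b\<in>T. keyc c a < keyc c b"
    using top_sel[OF Suc.prems(2,1) rh] by blast
  define S where "S = {a\<in>F-T. \<exists>b\<in>T. \<not> grid_le a b}"
  have finS: "finite S" using Suc.prems(2) S_def by auto
  have S1: "card S \<le> 1"
  proof -
    have "\<forall>x\<in>S. \<forall>y\<in>S. x = y"
    proof (intro ballI)
      fix x y assume x: "x \<in> S" and y: "y \<in> S"
      obtain b1 where b1: "b1 \<in> T" "\<not> grid_le x b1" using x S_def by auto
      obtain b2 where b2: "b2 \<in> T" "\<not> grid_le y b2" using y S_def by auto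
      have xy: "x \<in> F - T" "y \<in> F - T" using x y S_def by auto
      have m: "x \<in> bandc c" "y \<in> bandc c" "b1 \<in> bandc c" "b2 \<in> bandc c"
        using xy b1(1) b2(1) T(1) Suc.prems(1) by auto
      have k: "keyc c x < keyc c b1" "keyc c y < keyc c b1" "keyc c x < keyc c b2" "keyc c y < keyc c b2"
        using T(3) xy b1(1) b2(1) by auto
      show "x = y" by (rule two_bad[OF m k b1(2) b2(2)])
    qed
    then show ?thesis using card_le_Suc0_iff_eq[OF finS] by simp
  qed
  define F' where "F' = F - (T \<union> S)"
  have fin': "finite F'" "F' \<subseteq> bandc c" using Suc.prems(1,2) F'_def by auto
  have TS1: "T \<union> S \<subseteq> F" using T(1) S_def by auto
  have TS: "T \<union> S \<subseteq> F" "finite (T \<union> S)" using TS1 finite_subset[OF TS1 Suc.prems(2)] by auto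
  have "card F' = card F - card (T \<union> S)" unfolding F'_def using card_Diff_subset[OF TS(2) TS(1)] .
  moreover have "card (T \<union> S) \<le> r h + 1" using card_Un_le[of T S] T(2) S1 by simp
  moreover have "card (T \<union> S) \<le> card F" using card_mono[OF Suc.prems(2) TS(1)] .
  ultimately have cardF': "card F \<le> card F' + r h + 1" by linarith
  have "(\<Sum>i<Suc h. r i) + Suc h \<le> card F + 1" using Suc.prems(3) .
  then have "(\<Sum>i<h. r i) + r h + Suc h \<le> card F + 1" by simp
  then have "(\<Sum>i<h. r i) + h \<le> card F' + 1" using cardF' by linarith
  from Suc.IH[OF fin'(2) fin'(1) this] obtain B where B0: "(\<forall>i<h. B i \<subseteq> F' \<and> card (B i) = r i)
     \<and> (\<forall>i<h. \<forall>j<h. i < j \<longrightarrow> (\<forall>a\<in>B i. \<forall>b\<in>B j. grid_le a b))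
     \<and> (\<forall>i<h. \<forall>j<h. i \<noteq> j \<longrightarrow> B i \<inter> B j = {})"
    by (rule exE)
  note B = B0[THEN conjunct1] B0[THEN conjunct2, THEN conjunct1] B0[THEN conjunct2, THEN conjunct2]
  have good: "\<forall>a\<in>F'. \<forall>b\<in>T. grid_le a b"
  proof (intro ballI)
    fix a b assume a: "a \<in> F'" and b: "b \<in> T"
    have "a \<in> F - T" "a \<notin> S" using a F'_def by auto
    then show "grid_le a b" using b S_def by blast
  qed
  have disjT: "\<forall>i<h. B i \<inter> T = {}" using B(1) F'_def by auto
  define B' where "B' = B(h := T)"
  have P1: "\<forall>i<Suc h. B' i \<subseteq> F \<and> card (B' i) = r i"
  proof (intro allI impI)
    fix i assume i: "i < Suc h"
    show "B' i \<subseteq> F \<and> card (B' i) = r i"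
    proof (cases "i = h")
      case True
      then show ?thesis using T(1,2) B'_def by simp
    next
      case False
      then have "i < h" using i by simp
      then have "B i \<subseteq> F' \<and> card (B i) = r i" using B(1) by blast
      then show ?thesis using False B'_def F'_def by auto
    qed
  qed
  have P2: "\<forall>i<Suc h. \<forall>j<Suc h. i < j \<longrightarrow> (\<forall>a\<in>B' i. \<forall>b\<in>B' j. grid_le a b)"
  proof (intro allI impI)
    fix i j assume ij: "i < Suc h" "j < Suc h" "i < j"
    show "\<forall>a\<in>B' i. \<forall>b\<in>B' j. grid_le a b"
    proof (cases "j = h")
      case True
      then have ih: "i < h" "i \<noteq> h" using ij by auto
      then have "B i \<subseteq> F'" using B(1) by blast
      then show ?thesis using True ih good B'_def by auto
    next
      case False
      then have jh: "j < h" "i < h" "i \<noteq> h" "j \<noteq> h" using ij by auto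
      then have "\<forall>a\<in>B i. \<forall>b\<in>B j. grid_le a b" using B(2) ij(3) by blast
      then show ?thesis using jh B'_def by auto
    qed
  qed
  have P3: "\<forall>i<Suc h. \<forall>j<Suc h. i \<noteq> j \<longrightarrow> B' i \<inter> B' j = {}"
  proof (intro allI impI)
    fix i j assume ij: "i < Suc h" "j < Suc h" "i \<noteq> j"
    show "B' i \<inter> B' j = {}"
    proof (cases "i = h")
      case True
      then have "j < h" "j \<noteq> h" using ij by auto
      then show ?thesis using True disjT B'_def by auto
    next
      case iF: False
      show ?thesis
      proof (cases "j = h")
        case True
        then have "i < h" using ij iF by simp
        then show ?thesis using True iF disjT B'_def by auto
      next
        case False
        then have "i < h" "j < h" using ij iF by auto
        then have "B i \<inter> B j = {}" using B(3) ij(3) by blast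
        then show ?thesis using False iF B'_def by auto
      qed
    qed
  qed
  show ?case using P1 P2 P3 by blast
qed

lemma embed_band:
  assumes P: "finite P" and rho1: "\<forall>x\<in>P. \<rho> x < h"
    and rho2: "\<forall>x\<in>P. \<forall>y\<in>P. leP x y \<and> x \<noteq> y \<longrightarrow> \<rho> x < \<rho> y"
    and F: "F \<subseteq> bandc c" "finite F" "card P + h \<le> card F + 1"
  shows "weak_subposet P leP F grid_le"
proof -
  define R where "R i = {x\<in>P. \<rho> x = i}" for i
  have sumR: "(\<Sum>i<h. card (R i)) = card P"
  proof -
    have "(\<Sum>i<h. card (R i)) = (\<Sum>i<h. \<Sum>x\<in>{x. x \<in> P \<and> \<rho> x = i}. (1::nat))"
      unfolding R_def by simp
    also have "\<dots> = (\<Sum>x\<in>P. (1::nat))"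
      using sum.group[where S=P and T="{..<h}" and g=\<rho> and h="\<lambda>_. (1::nat)"] P rho1 by auto
    also have "\<dots> = card P" by simp
    finally show ?thesis .
  qed
  have "(\<Sum>i<h. card (R i)) + h \<le> card F + 1" using sumR F(3) by simp
  from blocks[OF F(1,2) this] obtain B where B0: "(\<forall>i<h. B i \<subseteq> F \<and> card (B i) = card (R i))
     \<and> (\<forall>i<h. \<forall>j<h. i < j \<longrightarrow> (\<forall>a\<in>B i. \<forall>b\<in>B j. grid_le a b))
     \<and> (\<forall>i<h. \<forall>j<h. i \<noteq> j \<longrightarrow> B i \<inter> B j = {})"
    by (rule exE)
  note B = B0[THEN conjunct1] B0[THEN conjunct2, THEN conjunct1] B0[THEN conjunct2, THEN conjunct2]
  have "\<forall>i\<in>{..<h}. \<exists>f. bij_betw f (R i) (B i)"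
  proof
    fix i assume "i \<in> {..<h}"
    then have Bi: "B i \<subseteq> F" "card (B i) = card (R i)" using B(1) by auto
    have "finite (R i)" using P R_def by auto
    moreover have "finite (B i)" using finite_subset[OF Bi(1) F(2)] .
    ultimately show "\<exists>f. bij_betw f (R i) (B i)" using finite_same_card_bij Bi(2)[symmetric] by blast
  qed
  from bchoice[OF this] obtain f where f: "\<forall>i\<in>{..<h}. bij_betw (f i) (R i) (B i)"
    by (rule exE)
  define g where "g x = f (\<rho> x) x" for x
  have gB: "g x \<in> B (\<rho> x)" if "x \<in> P" for x
  proof -
    have "\<rho> x < h" using rho1 that by auto
    then have "bij_betw (f (\<rho> x)) (R (\<rho> x)) (B (\<rho> x))" using f by auto
    moreover have "x \<in> R (\<rho> x)" using that R_def by auto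
    ultimately show ?thesis unfolding g_def using bij_betwE by blast
  qed
  show ?thesis unfolding weak_subposet_def
  proof (intro exI[of _ g] conjI)
    show "inj_on g P"
    proof (rule inj_onI)
      fix x y assume x: "x \<in> P" and y: "y \<in> P" and e: "g x = g y"
      have eq: "\<rho> x = \<rho> y"
      proof (rule ccontr)
        assume ne: "\<rho> x \<noteq> \<rho> y"
        have "\<rho> x < h" "\<rho> y < h" using rho1 x y by auto
        then have "B (\<rho> x) \<inter> B (\<rho> y) = {}" using B(3) ne by blast
        then show False using gB[OF x] gB[OF y] e by auto
      qed
      have "\<rho> x < h" using rho1 x by auto
      then have "inj_on (f (\<rho> x)) (R (\<rho> x))" using f bij_betw_def by auto
      moreover have "x \<in> R (\<rho> x)" "y \<in> R (\<rho> x)" using x y eq R_def by auto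
      moreover have "f (\<rho> x) x = f (\<rho> x) y" using e eq g_def by simp
      ultimately show "x = y" by (meson inj_onD)
    qed
    show "g ` P \<subseteq> F"
    proof
      fix z assume "z \<in> g ` P"
      then obtain x where x: "x \<in> P" "z = g x" by auto
      have "\<rho> x < h" using rho1 x by auto
      then have "B (\<rho> x) \<subseteq> F" using B(1) by blast
      then show "z \<in> F" using gB[OF x(1)] x(2) by auto
    qed
    show "\<forall>p\<in>P. \<forall>q\<in>P. leP p q \<longrightarrow> grid_le (g p) (g q)"
    proof (intro ballI impI)
      fix p q assume p: "p \<in> P" and q: "q \<in> P" and le: "leP p q"
      show "grid_le (g p) (g q)"
      proof (cases "p = q")
        case True
        then show ?thesis by (simp add: grid_le_def)
      next
        case False
        then have lt: "\<rho> p < \<rho> q" using rho2 p q le by auto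
        have "\<rho> p < h" "\<rho> q < h" using rho1 p q by auto
        then have "\<forall>a\<in>B (\<rho> p). \<forall>b\<in>B (\<rho> q). grid_le a b" using B(2) lt by blast
        then show ?thesis using gB[OF p] gB[OF q] by blast
      qed
    qed
  qed
qed

lemma rho_exists:
  assumes P: "finite P" and po: "poset_on P leP"
  shows "\<exists>\<rho>. (\<forall>x\<in>P. \<rho> x < height P leP) \<and> (\<forall>x\<in>P. \<forall>y\<in>P. leP x y \<and> x \<noteq> y \<longrightarrow> \<rho> x < \<rho> y)"
proof -
  have po': "(\<forall>x\<in>P. leP x x) \<and> (\<forall>x\<in>P. \<forall>y\<in>P. leP x y \<and> leP y x \<longrightarrow> x = y) \<and>
     (\<forall>x\<in>P. \<forall>y\<in>P. \<forall>z\<in>P. leP x y \<and> leP y z \<longrightarrow> leP x z)"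
    using po unfolding poset_on_def .
  note refl = po'[THEN conjunct1] and antis = po'[THEN conjunct2, THEN conjunct1]
    and trans = po'[THEN conjunct2, THEN conjunct2]
  define CS where "CS x = {card C | C. C \<subseteq> P \<and> is_chain leP C \<and> x \<in> C \<and> (\<forall>c\<in>C. leP c x)}" for x
  define HS where "HS = {card C | C. C \<subseteq> P \<and> is_chain leP C}"
  define M where "M x = Max (CS x)" for x
  have finPow: "finite (card ` Pow P)" using P by simp
  have subCS: "CS x \<subseteq> card ` Pow P" for x
  proof
    fix n assume "n \<in> CS x"
    then obtain C where "n = card C" "C \<subseteq> P" unfolding CS_def by blast
    then show "n \<in> card ` Pow P" by blast
  qed
  have subHS: "HS \<subseteq> card ` Pow P"
  proof
    fix n assume "n \<in> HS"
    then obtain C where "n = card C" "C \<subseteq> P" unfolding HS_def by blast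
    then show "n \<in> card ` Pow P" by blast
  qed
  have finCS: "finite (CS x)" for x using finite_subset[OF subCS finPow] .
  have finHS: "finite HS" using finite_subset[OF subHS finPow] .
  have hdef: "height P leP = Max HS" unfolding height_def HS_def by simp
  have CSne: "CS x \<noteq> {}" if "x \<in> P" for x
  proof -
    have "{x} \<subseteq> P \<and> is_chain leP {x} \<and> x \<in> {x} \<and> (\<forall>c\<in>{x}. leP c x)"
      using that refl unfolding is_chain_def by auto
    then have "card {x} \<in> CS x" unfolding CS_def by blast
    then show ?thesis by auto
  qed
  have M1: "1 \<le> M x" if "x \<in> P" for x
  proof -
    have "{x} \<subseteq> P \<and> is_chain leP {x} \<and> x \<in> {x} \<and> (\<forall>c\<in>{x}. leP c x)"
      using that refl unfolding is_chain_def by auto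
    then have "card {x} \<in> CS x" unfolding CS_def by blast
    then have "card {x} \<le> M x" unfolding M_def using finCS Max_ge by blast
    then show ?thesis by simp
  qed
  have Mh: "M x \<le> height P leP" if "x \<in> P" for x
  proof -
    have "M x \<in> CS x" unfolding M_def using Max_in[OF finCS CSne[OF that]] .
    then obtain C where C: "M x = card C" "C \<subseteq> P" "is_chain leP C" unfolding CS_def by blast
    then have "M x \<in> HS" unfolding HS_def by blast
    then show ?thesis unfolding hdef using Max_ge[OF finHS] by blast
  qed
  have Mlt: "M x < M y" if xy: "x \<in> P" "y \<in> P" "leP x y" "x \<noteq> y" for x y
  proof -
    have "M x \<in> CS x" unfolding M_def using Max_in[OF finCS CSne[OF xy(1)]] .
    then obtain C where C: "M x = card C" "C \<subseteq> P" "is_chain leP C" "x \<in> C" "\<forall>c\<in>C. leP c x"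
      unfolding CS_def by blast
    have finC: "finite C" using finite_subset[OF C(2) P] .
    have yC: "y \<notin> C"
    proof
      assume "y \<in> C"
      then have "leP y x" using C(5) by auto
      then show False using antis xy by blast
    qed
    have below: "\<forall>c\<in>C. leP c y" using C(2,5) trans xy by blast
    have "insert y C \<subseteq> P \<and> is_chain leP (insert y C) \<and> y \<in> insert y C \<and> (\<forall>c\<in>insert y C. leP c y)"
      using C(2,3) below refl xy(2) unfolding is_chain_def by auto
    then have "card (insert y C) \<in> CS y" unfolding CS_def by blast
    then have "card (insert y C) \<le> M y" unfolding M_def using finCS Max_ge by blast
    moreover have "card (insert y C) = M x + 1" using finC yC C(1) by simp
    ultimately show ?thesis by simp
  qed
  show ?thesis
  proof (intro exI[of _ "\<lambda>x. M x - 1"] conjI ballI impI)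
    fix x assume x: "x \<in> P"
    have "1 \<le> M x" "M x \<le> height P leP" using M1[OF x] Mh[OF x] by auto
    then show "M x - 1 < height P leP" by arith
  next
    fix x y assume xy: "x \<in> P" "y \<in> P" "leP x y \<and> x \<noteq> y"
    have "M x < M y" "1 \<le> M x" using Mlt[of x y] M1[of x] xy by auto
    then show "M x - 1 < M y - 1" by arith
  qed
qed

lemma weak_mono:
  assumes "weak_subposet P leP F' le" "F' \<subseteq> F"
  shows "weak_subposet P leP F le"
proof -
  from assms(1) obtain i where i: "inj_on i P" "i ` P \<subseteq> F'"
    "\<forall>p\<in>P. \<forall>q\<in>P. leP p q \<longrightarrow> le (i p) (i q)"
    unfolding weak_subposet_def by (elim exE conjE) 
  have "i ` P \<subseteq> F" using i(2) assms(2) by (rule subset_trans)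
  then show ?thesis unfolding weak_subposet_def using i(1) i(3) by (intro exI[of _ i] conjI)
qed

lemma band_bound:
  assumes P: "finite P" "poset_on P leP" and nf: "\<not> weak_subposet P leP F grid_le"
    and fin: "finite F"
  shows "card (F \<inter> bandc c) + 2 \<le> card P + height P leP"
proof (rule ccontr)
  assume "\<not> ?thesis"
  then have le: "card P + height P leP \<le> card (F \<inter> bandc c) + 1" by simp
  from rho_exists[OF P] obtain \<rho> where r: "(\<forall>x\<in>P. \<rho> x < height P leP) \<and>
      (\<forall>x\<in>P. \<forall>y\<in>P. leP x y \<and> x \<noteq> y \<longrightarrow> \<rho> x < \<rho> y)" by (rule exE)
  have sub: "F \<inter> bandc c \<subseteq> bandc c" by blast
  have finb: "finite (F \<inter> bandc c)" using fin by blast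
  have "weak_subposet P leP (F \<inter> bandc c) grid_le"
    by (rule embed_band[OF P(1) r[THEN conjunct1] r[THEN conjunct2] sub finb le])
  then have "weak_subposet P leP F grid_le" using weak_mono by blast
  then show False using nf by blast
qed

lemma finite_grid: "finite (grid k)"
  unfolding grid_def by simp

lemma card_grid_bound:
  assumes P: "finite P" "poset_on P leP" and nf: "\<not> weak_subposet P leP F grid_le"
    and F: "F \<subseteq> grid k"
  shows "card F \<le> ((k - 1) div 2 + 1) * (card P + height P leP - 2)"
proof -
  define J where "J = (k - 1) div 2"
  define cc where "cc j = 4 * int j - (int k - 1)" for j :: nat
  have finF: "finite F" using finite_subset[OF F finite_grid] .
  have cover: "F \<subseteq> (\<Union>j\<in>{..J}. F \<inter> bandc (cc j))"
  proof
    fix u assume u: "u \<in> F"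
    obtain x y where xy: "u = (x,y)" by (cases u)
    have "u \<in> grid k" using u F by blast
    then have r: "1 \<le> x" "x \<le> k" "1 \<le> y" "y \<le> k" using xy by (auto simp: grid_def)
    define d where "d = int x - int y + int k - 1"
    define j where "j = nat (d div 4)"
    have d0: "0 \<le> d" using r unfolding d_def by simp
    have d1: "d \<le> 2 * int k - 2" using r unfolding d_def by simp
    have jj: "int j = d div 4" unfolding j_def using d0 by simp
    have dm: "d = 4 * (d div 4) + d mod 4" by simp
    have m0: "0 \<le> d mod 4" "d mod 4 < 4" by simp_all
    have jd: "4 * int j \<le> d" "d \<le> 4 * int j + 3" using jj dm m0 by linarith+
    have "4 * int j \<le> 2 * int k - 2" using jd d1 by linarith
    then have "2 * j \<le> k - 1" using r by linarith
    then have "(2 * j) div 2 \<le> (k - 1) div 2" by (rule div_le_mono)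
    then have jJ: "j \<le> J" unfolding J_def by simp
    have "cc j \<le> int x - int y" "int x - int y \<le> cc j + 3"
      using jd unfolding cc_def d_def by linarith+
    then have "u \<in> bandc (cc j)" unfolding bandc_def xy by simp
    then show "u \<in> (\<Union>j\<in>{..J}. F \<inter> bandc (cc j))" using u jJ by blast
  qed
  have "card F \<le> card (\<Union>j\<in>{..J}. F \<inter> bandc (cc j))"
    by (rule card_mono[OF _ cover]) (simp add: finF)
  also have "\<dots> \<le> (\<Sum>j\<in>{..J}. card (F \<inter> bandc (cc j)))"
    by (rule card_UN_le) simp
  also have "\<dots> \<le> (\<Sum>j\<in>{..J}. card P + height P leP - 2)"
  proof (rule sum_mono)
    fix j assume "j \<in> {..J}"
    have "card (F \<inter> bandc (cc j)) + 2 \<le> card P + height P leP"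
      by (rule band_bound[OF P nf finF])
    then show "card (F \<inter> bandc (cc j)) \<le> card P + height P leP - 2" by simp
  qed
  also have "\<dots> = (J + 1) * (card P + height P leP - 2)" by simp
  finally show ?thesis unfolding J_def .
qed

lemma La_set_fin: "finite {card F | F. F \<subseteq> grid k \<and> \<not> weak_subposet P leP F grid_le}"
proof (rule finite_subset[of _ "card ` Pow (grid k)"])
  show "{card F | F. F \<subseteq> grid k \<and> \<not> weak_subposet P leP F grid_le} \<subseteq> card ` Pow (grid k)"
  proof
    fix n assume "n \<in> {card F | F. F \<subseteq> grid k \<and> \<not> weak_subposet P leP F grid_le}"
    then obtain F where "n = card F" "F \<subseteq> grid k" by blast
    then show "n \<in> card ` Pow (grid k)" by blast
  qed
  show "finite (card ` Pow (grid k))" using finite_grid by simp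
qed

lemma La_ge:
  assumes "F \<subseteq> grid k" "\<not> weak_subposet P leP F grid_le"
  shows "card F \<le> La (grid k) grid_le P leP"
proof -
  have "card F \<in> {card F | F. F \<subseteq> grid k \<and> \<not> weak_subposet P leP F grid_le}" using assms by blast
  then show ?thesis unfolding La_def using Max_ge[OF La_set_fin] by blast
qed

lemma La_in:
  assumes "P \<noteq> {}"
  shows "\<exists>F. F \<subseteq> grid k \<and> \<not> weak_subposet P leP F grid_le \<and> La (grid k) grid_le P leP = card F"
proof -
  have e: "\<not> weak_subposet P leP {} grid_le" using assms unfolding weak_subposet_def by blast
  have "card ({}::(nat\<times>nat) set) \<in> {card F | F. F \<subseteq> grid k \<and> \<not> weak_subposet P leP F grid_le}"
    using e by (intro CollectI exI[of _ "{}"]) simp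
  then have ne: "{card F | F. F \<subseteq> grid k \<and> \<not> weak_subposet P leP F grid_le} \<noteq> {}" by blast
  have "La (grid k) grid_le P leP \<in> {card F | F. F \<subseteq> grid k \<and> \<not> weak_subposet P leP F grid_le}"
    unfolding La_def by (rule Max_in[OF La_set_fin ne])
  then show ?thesis by blast
qed

lemma height_pos:
  assumes "finite P" "poset_on P leP" "P \<noteq> {}"
  shows "1 \<le> height P leP"
proof -
  from rho_exists[OF assms(1,2)] obtain \<rho> where r: "(\<forall>x\<in>P. \<rho> x < height P leP) \<and>
      (\<forall>x\<in>P. \<forall>y\<in>P. leP x y \<and> x \<noteq> y \<longrightarrow> \<rho> x < \<rho> y)" by (rule exE)
  obtain x where "x \<in> P" using assms(3) by blast
  then have "\<rho> x < height P leP" using r by blast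
  then show ?thesis by simp
qed

lemma La_upper:
  assumes P: "finite P" "P \<noteq> {}" "poset_on P leP" and k: "1 \<le> k"
  shows "real (La (grid k) grid_le P leP)
    \<le> ((real (card P) + real (height P leP)) / 2 - 1) * real k + (real (card P) + real (height P leP)) / 2"
proof -
  obtain F where F: "F \<subseteq> grid k" "\<not> weak_subposet P leP F grid_le" "La (grid k) grid_le P leP = card F"
    using La_in[OF P(2)] by blast
  have cb: "card F \<le> ((k - 1) div 2 + 1) * (card P + height P leP - 2)"
    by (rule card_grid_bound[OF P(1,3) F(2,1)])
  have h1: "1 \<le> height P leP" by (rule height_pos[OF P(1,3,2)])
  have p1: "1 \<le> card P" using P(1,2) by (simp add: Suc_le_eq card_gt_0_iff)
  define J where "J = (k - 1) div 2"
  have "J * 2 \<le> k - 1" unfolding J_def by simp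
  then have J2: "2 * real J \<le> real k - 1" using k by linarith
  define X where "X = real (card P) + real (height P leP) - 2"
  have X0: "0 \<le> X" unfolding X_def using h1 p1 by simp
  have cX: "real (card P + height P leP - 2) = X" unfolding X_def using h1 p1 by simp
  have "real (card F) \<le> real ((J + 1) * (card P + height P leP - 2))"
    using cb unfolding J_def by (simp only: of_nat_le_iff)
  also have "\<dots> = real (J + 1) * real (card P + height P leP - 2)" by (rule of_nat_mult)
  also have "\<dots> = (real J + 1) * X" using cX by simp
  also have "\<dots> \<le> ((real k + 1) / 2) * X"
    by (rule mult_right_mono) (use J2 X0 in simp_all)
  also have "\<dots> = ((real (card P) + real (height P leP)) / 2 - 1) * real k + X / 2"
    unfolding X_def by (simp add: field_simps)
  also have "\<dots> \<le> ((real (card P) + real (height P leP)) / 2 - 1) * real k + (real (card P) + real (height P leP)) / 2"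
    unfolding X_def by simp
  finally show ?thesis using F(3) by simp
qed

lemma D_poset: "poset_on (D_set m) (D_le m)"
  unfolding poset_on_def D_set_def D_le_def by auto

lemma D_card: "card (D_set m) = m + 2"
  unfolding D_set_def by simp

lemma D_height:
  assumes m: "1 \<le> m"
  shows "height (D_set m) (D_le m) = 3"
proof -
  define HS where "HS = {card C | C. C \<subseteq> D_set m \<and> is_chain (D_le m) C}"
  have subHS: "HS \<subseteq> card ` Pow (D_set m)"
  proof
    fix n assume "n \<in> HS"
    then obtain C where "n = card C" "C \<subseteq> D_set m" unfolding HS_def by blast
    then show "n \<in> card ` Pow (D_set m)" by blast
  qed
  have finHS: "finite HS" using finite_subset[OF subHS] by (simp add: D_set_def)
  have bound: "n \<le> 3" if nH: "n \<in> HS" for n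
  proof -
    obtain C where C: "n = card C" "C \<subseteq> D_set m" "is_chain (D_le m) C"
      using nH unfolding HS_def by blast
    have finC: "finite C" using C(2) finite_subset by (auto simp: D_set_def)
    have mid: "card (C \<inter> {1..m}) \<le> 1"
    proof -
      have "\<forall>x\<in>C \<inter> {1..m}. \<forall>y\<in>C \<inter> {1..m}. x = y"
      proof (intro ballI)
        fix x y assume x: "x \<in> C \<inter> {1..m}" and y: "y \<in> C \<inter> {1..m}"
        have "D_le m x y \<or> D_le m y x" using C(3) x y unfolding is_chain_def by blast
        then show "x = y" using x y unfolding D_le_def by auto
      qed
      then show ?thesis using card_le_Suc0_iff_eq[of "C \<inter> {1..m}"] finC by simp
    qed
    have "C \<subseteq> {0, m+1} \<union> (C \<inter> {1..m})" using C(2) unfolding D_set_def by auto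
    then have "card C \<le> card ({0, m+1} \<union> (C \<inter> {1..m}))"
      by (rule card_mono[rotated]) (simp add: finC)
    also have "\<dots> \<le> card {0, m+1::nat} + card (C \<inter> {1..m})" by (rule card_Un_le)
    also have "\<dots> \<le> 2 + 1" using mid by (simp add: card_insert_le)
    finally show ?thesis using C(1) by simp
  qed
  have three: "3 \<in> HS"
  proof -
    have "{0, 1, m+1} \<subseteq> D_set m" unfolding D_set_def using m by auto
    moreover have "is_chain (D_le m) {0, 1, m+1}" unfolding is_chain_def D_le_def by auto
    moreover have "card {0, 1, m+1::nat} = 3" using m by simp
    ultimately show ?thesis unfolding HS_def by (intro CollectI exI[of _ "{0, 1, m+1}"]) simp
  qed
  have "Max HS = 3" by (rule Max_eqI[OF finHS bound three])
  then show ?thesis unfolding height_def HS_def by simp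
qed

lemma Dfree:
  assumes fin: "finite F"
    and small: "\<forall>a\<in>F. \<forall>c\<in>F. card {b\<in>F. grid_le a b \<and> grid_le b c \<and> b \<noteq> a \<and> b \<noteq> c} < m"
  shows "\<not> weak_subposet (D_set m) (D_le m) F grid_le"
proof
  assume "weak_subposet (D_set m) (D_le m) F grid_le"
  then obtain i where i: "inj_on i (D_set m)" "i ` D_set m \<subseteq> F"
    "\<forall>p\<in>D_set m. \<forall>q\<in>D_set m. D_le m p q \<longrightarrow> grid_le (i p) (i q)"
    unfolding weak_subposet_def by (elim exE conjE)
  have z: "0 \<in> D_set m" and t: "m + 1 \<in> D_set m" unfolding D_set_def by auto
  have aF: "i 0 \<in> F" and cF: "i (m+1) \<in> F" using i(2) z t by auto
  have sub: "i ` {1..m} \<subseteq> {b\<in>F. grid_le (i 0) b \<and> grid_le b (i (m+1)) \<and> b \<noteq> i 0 \<and> b \<noteq> i (m+1)}"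
  proof
    fix b assume "b \<in> i ` {1..m}"
    then obtain j where j: "j \<in> {1..m}" "b = i j" by blast
    have jD: "j \<in> D_set m" using j(1) unfolding D_set_def by auto
    have "b \<in> F" using i(2) jD j(2) by auto
    moreover have "grid_le (i 0) b" using i(3) z jD j(2) unfolding D_le_def by auto
    moreover have "grid_le b (i (m+1))" using i(3) t jD j(2) unfolding D_le_def by auto
    moreover have "b \<noteq> i 0"
    proof
      assume "b = i 0"
      then have "j = 0" using inj_onD[OF i(1)] j(2) jD z by metis
      then show False using j(1) by simp
    qed
    moreover have "b \<noteq> i (m+1)"
    proof
      assume "b = i (m+1)"
      then have "j = m+1" using inj_onD[OF i(1)] j(2) jD t by metis
      then show False using j(1) by simp
    qed
    ultimately show "b \<in> {b\<in>F. grid_le (i 0) b \<and> grid_le b (i (m+1)) \<and> b \<noteq> i 0 \<and> b \<noteq> i (m+1)}"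
      by blast
  qed
  have "inj_on i {1..m}" using inj_on_subset[OF i(1)] unfolding D_set_def by auto
  then have "card (i ` {1..m}) = m" by (simp add: card_image)
  moreover have "card (i ` {1..m}) \<le> card {b\<in>F. grid_le (i 0) b \<and> grid_le b (i (m+1)) \<and> b \<noteq> i 0 \<and> b \<noteq> i (m+1)}"
    by (rule card_mono[OF _ sub]) (simp add: fin)
  moreover have "card {b\<in>F. grid_le (i 0) b \<and> grid_le b (i (m+1)) \<and> b \<noteq> i 0 \<and> b \<noteq> i (m+1)} < m"
    using small aF cF by blast
  ultimately show False by simp
qed

lemma between_rank:
  fixes a1 a2 b1 b2 c1 c2 k :: nat
  assumes "a1 \<le> b1" "a2 \<le> b2" "b1 \<le> c1" "b2 \<le> c2" "(b1, b2) \<noteq> (a1, a2)" "(b1, b2) \<noteq> (c1, c2)"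
    "k + 1 \<le> a1 + a2" "c1 + c2 \<le> k + 3"
  shows "b1 + b2 = k + 2 \<and> a1 + a2 = k + 1 \<and> ((b1 = a1 + 1 \<and> b2 = a2) \<or> (b1 = a1 \<and> b2 = a2 + 1))"
proof -
  have "a1 \<noteq> b1 \<or> a2 \<noteq> b2" using assms(5) by auto
  then have r1: "a1 + a2 < b1 + b2" using assms(1,2) by auto
  have "b1 \<noteq> c1 \<or> b2 \<noteq> c2" using assms(6) by auto
  then have r2: "b1 + b2 < c1 + c2" using assms(3,4) by auto
  have e1: "b1 + b2 = k + 2" "a1 + a2 = k + 1" using r1 r2 assms(7,8) by linarith+
  then show ?thesis using assms(1,2) by auto
qed

definition F3set :: "nat \<Rightarrow> (nat \<times> nat) set" where
  "F3set k = {u \<in> grid k. k + 1 \<le> fst u + snd u \<and> fst u + snd u \<le> k + 3}"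

definition F2set :: "nat \<Rightarrow> (nat \<times> nat) set" where
  "F2set k = {u \<in> grid k. fst u + snd u = k + 1 \<or> fst u + snd u = k + 3 \<or>
                (fst u + snd u = k + 2 \<and> even (fst u))}"

lemma F3_free: "\<not> weak_subposet (D_set 3) (D_le 3) (F3set k) grid_le"
proof (rule Dfree)
  show "finite (F3set k)" unfolding F3set_def using finite_grid by simp
  show "\<forall>a\<in>F3set k. \<forall>c\<in>F3set k. card {b\<in>F3set k. grid_le a b \<and> grid_le b c \<and> b \<noteq> a \<and> b \<noteq> c} < 3"
  proof (intro ballI)
    fix a c assume a: "a \<in> F3set k" and c: "c \<in> F3set k"
    obtain a1 a2 where ae: "a = (a1, a2)" by (cases a)
    obtain c1 c2 where ce: "c = (c1, c2)" by (cases c)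
    have "{b\<in>F3set k. grid_le a b \<and> grid_le b c \<and> b \<noteq> a \<and> b \<noteq> c} \<subseteq> {(a1 + 1, a2), (a1, a2 + 1)}"
    proof
      fix b assume b: "b \<in> {b\<in>F3set k. grid_le a b \<and> grid_le b c \<and> b \<noteq> a \<and> b \<noteq> c}"
      obtain b1 b2 where be: "b = (b1, b2)" by (cases b)
      have "a1 \<le> b1" "a2 \<le> b2" "b1 \<le> c1" "b2 \<le> c2" "(b1, b2) \<noteq> (a1, a2)" "(b1, b2) \<noteq> (c1, c2)"
        using b unfolding ae ce be grid_le_def by auto
      moreover have "k + 1 \<le> a1 + a2" "c1 + c2 \<le> k + 3" using a c unfolding ae ce F3set_def by auto
      ultimately have "(b1 = a1 + 1 \<and> b2 = a2) \<or> (b1 = a1 \<and> b2 = a2 + 1)"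
        using between_rank by blast
      then show "b \<in> {(a1 + 1, a2), (a1, a2 + 1)}" unfolding be by auto
    qed
    then have "card {b\<in>F3set k. grid_le a b \<and> grid_le b c \<and> b \<noteq> a \<and> b \<noteq> c} \<le> card {(a1 + 1, a2), (a1, a2 + 1)}"
      by (rule card_mono[rotated]) simp
    also have "\<dots> \<le> 2" by (rule order_trans[OF card_insert_le_m1]) auto
    finally show "card {b\<in>F3set k. grid_le a b \<and> grid_le b c \<and> b \<noteq> a \<and> b \<noteq> c} < 3" by simp
  qed
qed

lemma F2_free: "\<not> weak_subposet (D_set 2) (D_le 2) (F2set k) grid_le"
proof (rule Dfree)
  show "finite (F2set k)" unfolding F2set_def using finite_grid by simp
  show "\<forall>a\<in>F2set k. \<forall>c\<in>F2set k. card {b\<in>F2set k. grid_le a b \<and> grid_le b c \<and> b \<noteq> a \<and> b \<noteq> c} < 2"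
  proof (intro ballI)
    fix a c assume a: "a \<in> F2set k" and c: "c \<in> F2set k"
    obtain a1 a2 where ae: "a = (a1, a2)" by (cases a)
    obtain c1 c2 where ce: "c = (c1, c2)" by (cases c)
    define S where "S = {b\<in>F2set k. grid_le a b \<and> grid_le b c \<and> b \<noteq> a \<and> b \<noteq> c}"
    have key: "fst b + snd b = a1 + a2 + 1 \<and> (fst b = a1 \<or> fst b = a1 + 1) \<and> even (fst b)" if b: "b \<in> S" for b
    proof -
      obtain b1 b2 where be: "b = (b1, b2)" by (cases b)
      have "a1 \<le> b1" "a2 \<le> b2" "b1 \<le> c1" "b2 \<le> c2" "(b1, b2) \<noteq> (a1, a2)" "(b1, b2) \<noteq> (c1, c2)"
        using b unfolding S_def ae ce be grid_le_def by auto
      moreover have "k + 1 \<le> a1 + a2" "c1 + c2 \<le> k + 3" using a c unfolding ae ce F2set_def by auto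
      ultimately have r: "b1 + b2 = k + 2 \<and> a1 + a2 = k + 1 \<and> ((b1 = a1 + 1 \<and> b2 = a2) \<or> (b1 = a1 \<and> b2 = a2 + 1))"
        by (rule between_rank)
      have "b \<in> F2set k" using b S_def by blast
      then have "even b1" using r unfolding be F2set_def by auto
      then show ?thesis using r unfolding be by auto
    qed
    have finS: "finite S" unfolding S_def F2set_def using finite_grid by simp
    have allS: "\<forall>x\<in>S. \<forall>y\<in>S. x = y"
    proof (intro ballI)
      fix x y assume x: "x \<in> S" and y: "y \<in> S"
      have kx: "fst x + snd x = a1 + a2 + 1" "fst x = a1 \<or> fst x = a1 + 1" "even (fst x)" using key[OF x] by auto
      have ky: "fst y + snd y = a1 + a2 + 1" "fst y = a1 \<or> fst y = a1 + 1" "even (fst y)" using key[OF y] by auto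
      have "fst x = fst y" using kx ky by auto
      moreover then have "snd x = snd y" using kx(1) ky(1) by simp
      ultimately show "x = y" by (simp add: prod_eq_iff)
    qed
    have "card S \<le> Suc 0" using card_le_Suc0_iff_eq[OF finS] allS by blast
    then have "card S \<le> 1" by simp
    then show "card {b\<in>F2set k. grid_le a b \<and> grid_le b c \<and> b \<noteq> a \<and> b \<noteq> c} < 2" unfolding S_def by simp
  qed
qed

definition Lset :: "nat \<Rightarrow> nat \<Rightarrow> (nat \<times> nat) set" where
  "Lset k t = (\<lambda>x. (x, k + t - x)) ` {t..k}"

lemma Lset_grid: "1 \<le> t \<Longrightarrow> Lset k t \<subseteq> grid k"
  unfolding Lset_def grid_def by auto

lemma Lset_rank: "Lset k t \<subseteq> {u. fst u + snd u = k + t}"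
  unfolding Lset_def by auto

lemma Lset_card: "card (Lset k t) = Suc k - t"
proof -
  have "inj_on (\<lambda>x. (x, k + t - x)) {t..k}" unfolding inj_on_def by simp
  then show ?thesis unfolding Lset_def by (simp add: card_image)
qed

definition Eset :: "nat \<Rightarrow> (nat \<times> nat) set" where
  "Eset k = (\<lambda>j. (2 * j, k + 2 - 2 * j)) ` {1..k div 2}"

lemma Eset_grid: "Eset k \<subseteq> grid k"
proof
  fix u assume "u \<in> Eset k"
  then obtain j where j: "1 \<le> j" "j \<le> k div 2" "u = (2 * j, k + 2 - 2 * j)" unfolding Eset_def by auto
  have "2 * j \<le> k" using j(2) by linarith
  then show "u \<in> grid k" using j unfolding grid_def by auto
qed

lemma Eset_prop: "Eset k \<subseteq> {u. fst u + snd u = k + 2 \<and> even (fst u)}"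
proof
  fix u assume "u \<in> Eset k"
  then obtain j where j: "1 \<le> j" "j \<le> k div 2" "u = (2 * j, k + 2 - 2 * j)" unfolding Eset_def by auto
  have "2 * j \<le> k" using j(2) by linarith
  then show "u \<in> {u. fst u + snd u = k + 2 \<and> even (fst u)}" using j by auto
qed

lemma Eset_card: "card (Eset k) = k div 2"
proof -
  have "inj_on (\<lambda>j. (2 * j, k + 2 - 2 * j)) {1..k div 2}" unfolding inj_on_def by simp
  then show ?thesis unfolding Eset_def by (simp add: card_image)
qed

lemma rank_disj:
  assumes "A \<subseteq> {u. fst u + snd u = r}" "B \<subseteq> {u. fst u + snd u = s}" "r \<noteq> s"
  shows "A \<inter> B = {}"
  using assms by auto

lemma F3_card: "real (card (F3set k)) \<ge> 3 * real k - 3"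
proof -
  have sub: "Lset k 1 \<union> Lset k 2 \<union> Lset k 3 \<subseteq> F3set k"
  proof -
    have "Lset k 1 \<subseteq> F3set k" using Lset_grid[of 1 k] Lset_rank[of k 1] unfolding F3set_def by auto
    moreover have "Lset k 2 \<subseteq> F3set k" using Lset_grid[of 2 k] Lset_rank[of k 2] unfolding F3set_def by auto
    moreover have "Lset k 3 \<subseteq> F3set k" using Lset_grid[of 3 k] Lset_rank[of k 3] unfolding F3set_def by auto
    ultimately show ?thesis by blast
  qed
  have fin: "finite (Lset k t)" for t unfolding Lset_def by simp
  have d12: "Lset k 1 \<inter> Lset k 2 = {}" by (rule rank_disj[OF Lset_rank Lset_rank]) simp
  have d3: "(Lset k 1 \<union> Lset k 2) \<inter> Lset k 3 = {}"
    using rank_disj[OF Lset_rank Lset_rank, of k 1 k 3] rank_disj[OF Lset_rank Lset_rank, of k 2 k 3] by auto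
  have "card (Lset k 1 \<union> Lset k 2 \<union> Lset k 3) = card (Lset k 1) + card (Lset k 2) + card (Lset k 3)"
    using card_Un_disjoint[OF _ _ d12] card_Un_disjoint[OF _ _ d3] fin by simp
  also have "\<dots> = (Suc k - 1) + (Suc k - 2) + (Suc k - 3)" by (simp add: Lset_card)
  finally have ceq: "card (Lset k 1 \<union> Lset k 2 \<union> Lset k 3) = (Suc k - 1) + (Suc k - 2) + (Suc k - 3)" .
  have "card (Lset k 1 \<union> Lset k 2 \<union> Lset k 3) \<le> card (F3set k)"
    by (rule card_mono[OF _ sub]) (simp add: F3set_def finite_grid)
  then have "(Suc k - 1) + (Suc k - 2) + (Suc k - 3) \<le> card (F3set k)" using ceq by simp
  then have "real ((Suc k - 1) + (Suc k - 2) + (Suc k - 3)) \<le> real (card (F3set k))" by (simp only: of_nat_le_iff)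
  moreover have "3 * real k - 3 \<le> real ((Suc k - 1) + (Suc k - 2) + (Suc k - 3))" by (simp add: of_nat_diff)
  ultimately show ?thesis by linarith
qed

lemma F2_card: "real (card (F2set k)) \<ge> 5 / 2 * real k - 3"
proof -
  have sub: "Lset k 1 \<union> Lset k 3 \<union> Eset k \<subseteq> F2set k"
  proof -
    have "Lset k 1 \<subseteq> F2set k" using Lset_grid[of 1 k] Lset_rank[of k 1] unfolding F2set_def by auto
    moreover have "Lset k 3 \<subseteq> F2set k" using Lset_grid[of 3 k] Lset_rank[of k 3] unfolding F2set_def by auto
    moreover have "Eset k \<subseteq> F2set k" using Eset_grid[of k] Eset_prop[of k] unfolding F2set_def by auto
    ultimately show ?thesis by blast
  qed
  have fin: "finite (Lset k t)" for t unfolding Lset_def by simp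
  have finE: "finite (Eset k)" unfolding Eset_def by simp
  have ER: "Eset k \<subseteq> {u. fst u + snd u = k + 2}" using Eset_prop by blast
  have d13: "Lset k 1 \<inter> Lset k 3 = {}" by (rule rank_disj[OF Lset_rank Lset_rank]) simp
  have dE: "(Lset k 1 \<union> Lset k 3) \<inter> Eset k = {}"
    using rank_disj[OF Lset_rank ER, of k 1] rank_disj[OF Lset_rank ER, of k 3] by auto
  have "card (Lset k 1 \<union> Lset k 3 \<union> Eset k) = card (Lset k 1) + card (Lset k 3) + card (Eset k)"
    using card_Un_disjoint[OF _ _ d13] card_Un_disjoint[OF _ _ dE] fin finE by simp
  also have "\<dots> = (Suc k - 1) + (Suc k - 3) + k div 2" by (simp add: Lset_card Eset_card)
  finally have ceq: "card (Lset k 1 \<union> Lset k 3 \<union> Eset k) = (Suc k - 1) + (Suc k - 3) + k div 2" .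
  have "card (Lset k 1 \<union> Lset k 3 \<union> Eset k) \<le> card (F2set k)"
    by (rule card_mono[OF _ sub]) (simp add: F2set_def finite_grid)
  then have "(Suc k - 1) + (Suc k - 3) + k div 2 \<le> card (F2set k)" using ceq by simp
  then have "real ((Suc k - 1) + (Suc k - 3) + k div 2) \<le> real (card (F2set k))" by (simp only: of_nat_le_iff)
  moreover have "real k - 1 \<le> 2 * real (k div 2)"
  proof -
    have "k \<le> 2 * (k div 2) + 1" by linarith
    then have "real k \<le> real (2 * (k div 2) + 1)" by (simp only: of_nat_le_iff)
    then show ?thesis by simp
  qed
  moreover have "real k - 2 \<le> real (Suc k - 3)" by (simp add: of_nat_diff)
  ultimately show ?thesis by simp
qed

lemma F3_sub: "F3set k \<subseteq> grid k" unfolding F3set_def by auto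
lemma F2_sub: "F2set k \<subseteq> grid k" unfolding F2set_def by auto

lemma D_bounds:
  assumes m: "1 \<le> m" and k: "1 \<le> k"
  shows "real (La (grid k) grid_le (D_set m) (D_le m)) \<le> ((real m + 3) / 2) * real k + (real m + 5) / 2"
proof -
  have fin: "finite (D_set m)" unfolding D_set_def by simp
  have ne: "D_set m \<noteq> {}" unfolding D_set_def by auto
  have "real (La (grid k) grid_le (D_set m) (D_le m))
    \<le> ((real (card (D_set m)) + real (height (D_set m) (D_le m))) / 2 - 1) * real k
       + (real (card (D_set m)) + real (height (D_set m) (D_le m))) / 2"
    by (rule La_upper[OF fin ne D_poset k])
  also have "\<dots> = ((real m + 3) / 2) * real k + (real m + 5) / 2"
    using D_height[OF m] D_card[of m] by (simp add: field_simps)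
  finally show ?thesis .
qed

theorem proposition1p6:
  shows "(\<forall>(P::'a set) leP. finite P \<and> P \<noteq> {} \<and> poset_on P leP \<longrightarrow>
            (\<exists>C::real. \<forall>k::nat\<ge>1.
               real (La (grid k) grid_le P leP)
                 \<le> ((real (card P) + real (height P leP)) / 2 - 1) * real k + C))
       \<and> (\<exists>C::real. \<forall>k::nat\<ge>1.
               \<bar>real (La (grid k) grid_le (D_set 2) (D_le 2)) - 5/2 * real k\<bar> \<le> C)
       \<and> (\<exists>C::real. \<forall>k::nat\<ge>1.
               \<bar>real (La (grid k) grid_le (D_set 3) (D_le 3)) - 3 * real k\<bar> \<le> C)"
proof (intro conjI)
  show "\<forall>(P::'a set) leP. finite P \<and> P \<noteq> {} \<and> poset_on P leP \<longrightarrow>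
            (\<exists>C::real. \<forall>k::nat\<ge>1.
               real (La (grid k) grid_le P leP)
                 \<le> ((real (card P) + real (height P leP)) / 2 - 1) * real k + C)"
  proof (intro allI impI)
    fix P :: "'a set" and leP
    assume H: "finite P \<and> P \<noteq> {} \<and> poset_on P leP"
    show "\<exists>C::real. \<forall>k::nat\<ge>1. real (La (grid k) grid_le P leP)
                 \<le> ((real (card P) + real (height P leP)) / 2 - 1) * real k + C"
    proof (intro exI[of _ "(real (card P) + real (height P leP)) / 2"] allI impI)
      fix k :: nat assume "1 \<le> k"
      then show "real (La (grid k) grid_le P leP)
          \<le> ((real (card P) + real (height P leP)) / 2 - 1) * real k + (real (card P) + real (height P leP)) / 2"
        using La_upper H by blast
    qed
  qed
  show "\<exists>C::real. \<forall>k::nat\<ge>1. \<bar>real (La (grid k) grid_le (D_set 2) (D_le 2)) - 5/2 * real k\<bar> \<le> C"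
  proof (intro exI[of _ "7/2"] allI impI)
    fix k :: nat assume k: "1 \<le> k"
    have U: "real (La (grid k) grid_le (D_set 2) (D_le 2)) \<le> 5 / 2 * real k + 7 / 2"
      using D_bounds[of 2 k] k by simp
    have "card (F2set k) \<le> La (grid k) grid_le (D_set 2) (D_le 2)"
      by (rule La_ge[OF F2_sub F2_free])
    then have "real (card (F2set k)) \<le> real (La (grid k) grid_le (D_set 2) (D_le 2))"
      by (simp only: of_nat_le_iff)
    then have L: "5 / 2 * real k - 3 \<le> real (La (grid k) grid_le (D_set 2) (D_le 2))"
      using F2_card[of k] by linarith
    show "\<bar>real (La (grid k) grid_le (D_set 2) (D_le 2)) - 5/2 * real k\<bar> \<le> 7/2"
      unfolding abs_le_iff using U L by (intro conjI) linarith+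
  qed
  show "\<exists>C::real. \<forall>k::nat\<ge>1. \<bar>real (La (grid k) grid_le (D_set 3) (D_le 3)) - 3 * real k\<bar> \<le> C"
  proof (intro exI[of _ "4"] allI impI)
    fix k :: nat assume k: "1 \<le> k"
    have U: "real (La (grid k) grid_le (D_set 3) (D_le 3)) \<le> 3 * real k + 4"
      using D_bounds[of 3 k] k by simp
    have "card (F3set k) \<le> La (grid k) grid_le (D_set 3) (D_le 3)"
      by (rule La_ge[OF F3_sub F3_free])
    then have "real (card (F3set k)) \<le> real (La (grid k) grid_le (D_set 3) (D_le 3))"
      by (simp only: of_nat_le_iff)
    then have L: "3 * real k - 3 \<le> real (La (grid k) grid_le (D_set 3) (D_le 3))"
      using F3_card[of k] by linarith
    show "\<bar>real (La (grid k) grid_le (D_set 3) (D_le 3)) - 3 * real k\<bar> \<le> 4"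
      unfolding abs_le_iff using U L by (intro conjI) linarith+
  qed
qed

end
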